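(* A causal graph dynamics $F:\mathcal{G}_{\Sigma,\Delta,\pi}\to\mathcal{G}_{\Sigma,\Delta,\pi}$ is monotonic for the subgraph order if and only if it is a left Kan extension, i.e. there exist $r\ge 0$ and a monotonic function $f:\mathcal{D}^r_{\Sigma,\Delta,\pi}\to\mathcal{G}_{\Sigma,\Delta,\pi}$ (subdisk order to subgraph order) such that for every graph $G$ the set $\{f(D)\mid D\in\mathcal{D}^r_{\Sigma,\Delta,\pi},\ i(D)\subseteq G\}$ has a supremum in $(\mathcal{G}_{\Sigma,\Delta,\pi},\subseteq)$ equal to $F(G)$, where $i((H,c))=H$ is the pointer dropping function.
   Context: Fix an uncountably infinite set $\mathcal{V}$ of vertex names, sets $\Sigma,\Delta$ and a finite port set $\pi$. A graph $G$: countable $V(G)\subset\mathcal{V}$; a set $E(G)$ of pairwise disjoint two-element subsets of $V(G)\times\pi$; partial labelings $\sigma(G):V(G)\rightharpoonup\Sigma$, $\delta(G):E(G)\rightharpoonup\Delta$. $\mathcal{G}_{\Sigma,\Delta,\pi}$ is the set of graphs. Subgraph order $G\subseteq H$: componentwise inclusion of $V,E,\sigma,\delta$ (partial functions as sets of pairs); for pointed graphs $(G,v)\subseteq(H,u)$ iff $G\subseteq H$ and $v=u$ (subdisk order). Consistency of two graphs: edge sets jointly pairwise disjoint and labelings agreeing on common domains; union and intersection are componentwise; $\varnothing$ is the empty graph. With $d_G$ the shortest-path distance and $B_G(c,r)$ the ball, the disk $G^r_c=(H,c)$ has $V(H)=B_G(c,r+1)$, $E(H)$ = edges of $G$ with an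 endpoint in $B_G(c,r)$, $\sigma(H)=\sigma(G)|_{B_G(c,r)}$, $\delta(H)=\delta(G)|_{E(H)}$; $\mathcal{D}^r_{\Sigma,\Delta,\pi}$ is the set of radius-$r$ disks. Renamings are bijections of $\mathcal{V}$ acting naturally on edges, graphs and pointed graphs. A local rule of radius $r$ is $f:\mathcal{D}^r\to\mathcal{G}$ satisfying: (1) every renaming $R$ has a renaming $R'$ with $f\circ R=R'\circ f$; (2) families of disks with empty intersection have images with empty intersection; (3) $|V(f(D))|$ uniformly bounded; (4) $f(G^r_u)$ and $f(G^r_v)$ consistent for all $G,u,v$. A CGD is $F(G)=\bigcup_{v\in V(G)}f(G^r_v)$ for some local rule $f$. *)

theory Defs
  imports Main "HOL-Library.Countable_Set"
begin

text \<open>Partial labelings are represented as sets of pairs (single-valued relations),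
  so that the subgraph order, union and intersection are literally componentwise.\<close>

record ('v, 'p, 's, 'd) graph =
  verts :: "'v set"
  edges :: "('v \<times> 'p) set set"
  vlab  :: "('v \<times> 's) set"
  elab  :: "(('v \<times> 'p) set \<times> 'd) set"

definition wf_graph :: "('v, 'p, 's, 'd) graph \<Rightarrow> bool" where
  "wf_graph G \<longleftrightarrow>
     countable (verts G) \<and>
     (\<forall>e\<in>edges G. card e = 2 \<and> e \<subseteq> verts G \<times> UNIV) \<and>
     (\<forall>e1\<in>edges G. \<forall>e2\<in>edges G. e1 \<noteq> e2 \<longrightarrow> e1 \<inter> e2 = {}) \<and>
     single_valued (vlab G) \<and> Domain (vlab G) \<subseteq> verts G \<and>
     single_valued (elab G) \<and> Domain (elab G) \<subseteq> edges G"

definition Graphs :: "('v, 'p, 's, 'd) graph set" where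
  "Graphs = {G. wf_graph G}"

definition subgraph :: "('v, 'p, 's, 'd) graph \<Rightarrow> ('v, 'p, 's, 'd) graph \<Rightarrow> bool" where
  "subgraph G H \<longleftrightarrow> verts G \<subseteq> verts H \<and> edges G \<subseteq> edges H \<and>
                      vlab G \<subseteq> vlab H \<and> elab G \<subseteq> elab H"

definition subdisk :: "('v, 'p, 's, 'd) graph \<times> 'v \<Rightarrow> ('v, 'p, 's, 'd) graph \<times> 'v \<Rightarrow> bool" where
  "subdisk D D' \<longleftrightarrow> subgraph (fst D) (fst D') \<and> snd D = snd D'"

definition empty_graph :: "('v, 'p, 's, 'd) graph" where
  "empty_graph = \<lparr>verts = {}, edges = {}, vlab = {}, elab = {}\<rparr>"

definition Gunion :: "('v, 'p, 's, 'd) graph set \<Rightarrow> ('v, 'p, 's, 'd) graph" where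
  "Gunion S = \<lparr>verts = \<Union>(verts ` S), edges = \<Union>(edges ` S),
               vlab = \<Union>(vlab ` S), elab = \<Union>(elab ` S)\<rparr>"

definition Ginter :: "('v, 'p, 's, 'd) graph set \<Rightarrow> ('v, 'p, 's, 'd) graph" where
  "Ginter S = \<lparr>verts = \<Inter>(verts ` S), edges = \<Inter>(edges ` S),
               vlab = \<Inter>(vlab ` S), elab = \<Inter>(elab ` S)\<rparr>"

definition consistent :: "('v, 'p, 's, 'd) graph \<Rightarrow> ('v, 'p, 's, 'd) graph \<Rightarrow> bool" where
  "consistent G H \<longleftrightarrow>
     (\<forall>e1\<in>edges G \<union> edges H. \<forall>e2\<in>edges G \<union> edges H. e1 \<noteq> e2 \<longrightarrow> e1 \<inter> e2 = {}) \<and>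
     single_valued (vlab G \<union> vlab H) \<and> single_valued (elab G \<union> elab H)"

definition adj :: "('v, 'p, 's, 'd) graph \<Rightarrow> ('v \<times> 'v) set" where
  "adj G = {(u, v). \<exists>e\<in>edges G. \<exists>p q. (u, p) \<in> e \<and> (v, q) \<in> e}"

definition ball :: "('v, 'p, 's, 'd) graph \<Rightarrow> 'v \<Rightarrow> nat \<Rightarrow> 'v set" where
  "ball G c r = {v. \<exists>k\<le>r. (c, v) \<in> (adj G) ^^ k}"

definition disk :: "nat \<Rightarrow> ('v, 'p, 's, 'd) graph \<Rightarrow> 'v \<Rightarrow> ('v, 'p, 's, 'd) graph \<times> 'v" where
  "disk r G c =
     (\<lparr>verts = ball G c (Suc r),
       edges = {e \<in> edges G. \<exists>v p. (v, p) \<in> e \<and> v \<in> ball G c r},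
       vlab = {(v, a) \<in> vlab G. v \<in> ball G c r},
       elab = {(e, a) \<in> elab G. \<exists>v p. (v, p) \<in> e \<and> v \<in> ball G c r}\<rparr>, c)"

definition Disks :: "nat \<Rightarrow> (('v, 'p, 's, 'd) graph \<times> 'v) set" where
  "Disks r = {disk r G c | G c. wf_graph G \<and> c \<in> verts G}"

definition rn_edge :: "('v \<Rightarrow> 'v) \<Rightarrow> ('v \<times> 'p) set \<Rightarrow> ('v \<times> 'p) set" where
  "rn_edge R e = (\<lambda>(v, p). (R v, p)) ` e"

definition rename :: "('v \<Rightarrow> 'v) \<Rightarrow> ('v, 'p, 's, 'd) graph \<Rightarrow> ('v, 'p, 's, 'd) graph" where
  "rename R G = \<lparr>verts = R ` verts G, edges = rn_edge R ` edges G,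
                 vlab = (\<lambda>(v, a). (R v, a)) ` vlab G,
                 elab = (\<lambda>(e, a). (rn_edge R e, a)) ` elab G\<rparr>"

definition prename :: "('v \<Rightarrow> 'v) \<Rightarrow> ('v, 'p, 's, 'd) graph \<times> 'v \<Rightarrow> ('v, 'p, 's, 'd) graph \<times> 'v" where
  "prename R D = (rename R (fst D), R (snd D))"

definition local_rule :: "nat \<Rightarrow> (('v, 'p, 's, 'd) graph \<times> 'v \<Rightarrow> ('v, 'p, 's, 'd) graph) \<Rightarrow> bool" where
  "local_rule r f \<longleftrightarrow>
     (\<forall>D\<in>Disks r. wf_graph (f D)) \<and>
     (\<forall>R. bij R \<longrightarrow> (\<exists>R'. bij R' \<and> (\<forall>D\<in>Disks r. f (prename R D) = rename R' (f D)))) \<and>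
     (\<forall>S. S \<subseteq> Disks r \<and> Ginter (fst ` S) = empty_graph \<longrightarrow> Ginter (f ` S) = empty_graph) \<and>
     (\<exists>b::nat. \<forall>D\<in>Disks r. finite (verts (f D)) \<and> card (verts (f D)) \<le> b) \<and>
     (\<forall>G u v. wf_graph G \<and> u \<in> verts G \<and> v \<in> verts G \<longrightarrow>
              consistent (f (disk r G u)) (f (disk r G v)))"

definition is_CGD :: "(('v, 'p, 's, 'd) graph \<Rightarrow> ('v, 'p, 's, 'd) graph) \<Rightarrow> bool" where
  "is_CGD F \<longleftrightarrow> (\<exists>r f. local_rule r f \<and>
       (\<forall>G\<in>Graphs. F G = Gunion {f (disk r G v) | v. v \<in> verts G}))"

definition monotonic_dyn :: "(('v, 'p, 's, 'd) graph \<Rightarrow> ('v, 'p, 's, 'd) graph) \<Rightarrow> bool" where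
  "monotonic_dyn F \<longleftrightarrow> (\<forall>G\<in>Graphs. \<forall>H\<in>Graphs. subgraph G H \<longrightarrow> subgraph (F G) (F H))"

definition is_sup :: "('v, 'p, 's, 'd) graph set \<Rightarrow> ('v, 'p, 's, 'd) graph \<Rightarrow> bool" where
  "is_sup S X \<longleftrightarrow> X \<in> Graphs \<and> (\<forall>Y\<in>S. subgraph Y X) \<and>
                  (\<forall>Z\<in>Graphs. (\<forall>Y\<in>S. subgraph Y Z) \<longrightarrow> subgraph X Z)"

definition left_Kan_extension :: "(('v, 'p, 's, 'd) graph \<Rightarrow> ('v, 'p, 's, 'd) graph) \<Rightarrow> bool" where
  "left_Kan_extension F \<longleftrightarrow>
     (\<exists>(r::nat) (f :: ('v, 'p, 's, 'd) graph \<times> 'v \<Rightarrow> ('v, 'p, 's, 'd) graph).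
        (\<forall>D\<in>Disks r. f D \<in> Graphs) \<and>
        (\<forall>D\<in>Disks r. \<forall>D'\<in>Disks r. subdisk D D' \<longrightarrow> subgraph (f D) (f D')) \<and>
        (\<forall>G\<in>Graphs. is_sup {f D | D. D \<in> Disks r \<and> subgraph (fst D) G} (F G)))"

end

theory Submission
  imports Defs
begin

lemma subgraph_Gunion: "Y \<in> S \<Longrightarrow> subgraph Y (Gunion S)"
  unfolding subgraph_def Gunion_def by auto

lemma Gunion_subgraph: assumes "\<And>Y. Y \<in> S \<Longrightarrow> subgraph Y Z" shows "subgraph (Gunion S) Z"
  using assms unfolding subgraph_def Gunion_def by (simp add: UN_subset_iff)

lemma ball_center: "c \<in> ball G c r"
  unfolding ball_def by (rule CollectI, rule exI[of _ 0]) auto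

lemma adj_verts: "wf_graph G \<Longrightarrow> (u, v) \<in> adj G \<Longrightarrow> v \<in> verts G"
  unfolding adj_def wf_graph_def by blast

lemma ball_verts: assumes "wf_graph G" "c \<in> verts G" shows "ball G c r \<subseteq> verts G"
proof
  fix v assume "v \<in> ball G c r"
  then obtain k where "(c, v) \<in> adj G ^^ k" unfolding ball_def by auto
  then show "v \<in> verts G"
  proof (induction k arbitrary: v)
    case 0 then show ?case using assms by simp
  next
    case (Suc k) then show ?case using adj_verts[OF assms(1)] by auto
  qed
qed

lemma ball_step: "v \<in> ball G c r \<Longrightarrow> (v, u) \<in> adj G \<Longrightarrow> u \<in> ball G c (Suc r)"
  unfolding ball_def
  by (auto, metis Suc_le_mono relpow_Suc_I)

lemma edge_ball: assumes "e \<in> edges G" "(v, p) \<in> e" "v \<in> ball G c r" "(u, q) \<in> e"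
  shows "u \<in> ball G c (Suc r)"
proof -
  have "(v, u) \<in> adj G" using assms unfolding adj_def by blast
  then show ?thesis by (rule ball_step[OF assms(3)])
qed

lemma disk_simps:
  "verts (fst (disk r G c)) = ball G c (Suc r)"
  "edges (fst (disk r G c)) = {e \<in> edges G. \<exists>v p. (v, p) \<in> e \<and> v \<in> ball G c r}"
  "vlab (fst (disk r G c)) = {(v, a) \<in> vlab G. v \<in> ball G c r}"
  "elab (fst (disk r G c)) = {(e, a) \<in> elab G. \<exists>v p. (v, p) \<in> e \<and> v \<in> ball G c r}"
  "snd (disk r G c) = c"
  unfolding disk_def by simp_all

lemma wf_graphD: assumes "wf_graph G"
  shows "countable (verts G)" "\<And>e. e \<in> edges G \<Longrightarrow> card e = 2" "\<And>e. e \<in> edges G \<Longrightarrow> e \<subseteq> verts G \<times> UNIV"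
    "\<And>e1 e2. e1 \<in> edges G \<Longrightarrow> e2 \<in> edges G \<Longrightarrow> e1 \<noteq> e2 \<Longrightarrow> e1 \<inter> e2 = {}"
    "single_valued (vlab G)" "Domain (vlab G) \<subseteq> verts G" "single_valued (elab G)" "Domain (elab G) \<subseteq> edges G"
  using assms unfolding wf_graph_def by (simp_all only: Ball_def) blast+

lemma wf_disk: assumes "wf_graph G" "c \<in> verts G"
  shows "wf_graph (fst (disk r G c))"
proof -
  note W = assms(1)[unfolded wf_graph_def]
  have bv: "ball G c (Suc r) \<subseteq> verts G" by (rule ball_verts[OF assms])
  have cv: "countable (verts (fst (disk r G c)))"
    unfolding disk_simps using countable_subset[OF bv] W by blast
  have e1: "\<forall>e\<in>edges (fst (disk r G c)). card e = 2 \<and> e \<subseteq> verts (fst (disk r G c)) \<times> UNIV"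
  proof
    fix e assume "e \<in> edges (fst (disk r G c))"
    then obtain v p where h: "e \<in> edges G" "(v, p) \<in> e" "v \<in> ball G c r"
      unfolding disk_simps by blast
    have "card e = 2" using h(1) W by blast
    moreover have "e \<subseteq> ball G c (Suc r) \<times> UNIV"
    proof
      fix x assume "x \<in> e"
      then obtain u q where "x = (u, q)" "(u, q) \<in> e" by (cases x) blast
      then show "x \<in> ball G c (Suc r) \<times> UNIV" using edge_ball[OF h] by blast
    qed
    ultimately show "card e = 2 \<and> e \<subseteq> verts (fst (disk r G c)) \<times> UNIV"
      unfolding disk_simps by simp
  qed
  have bm: "ball G c r \<subseteq> ball G c (Suc r)" unfolding ball_def by (blast intro: le_SucI)
  have es: "edges (fst (disk r G c)) \<subseteq> edges G" unfolding disk_simps by blast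
  have s1: "single_valued (vlab (fst (disk r G c)))"
    by (rule single_valued_subset[of _ "vlab G"]) (unfold disk_simps, blast, use W in blast)
  have s2: "single_valued (elab (fst (disk r G c)))"
    by (rule single_valued_subset[of _ "elab G"]) (unfold disk_simps, blast, use W in blast)
  have d1: "Domain (vlab (fst (disk r G c))) \<subseteq> verts (fst (disk r G c))"
    using bm unfolding disk_simps by blast
  have d2: "Domain (elab (fst (disk r G c))) \<subseteq> edges (fst (disk r G c))"
  proof
    fix e assume "e \<in> Domain (elab (fst (disk r G c)))"
    then obtain a where ea: "(e, a) \<in> elab G" "\<exists>v p. (v, p) \<in> e \<and> v \<in> ball G c r"
      unfolding disk_simps by blast
    then have "e \<in> edges G" using W by blast
    then show "e \<in> edges (fst (disk r G c))" using ea(2) unfolding disk_simps by blast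
  qed
  have ed: "\<forall>e1\<in>edges (fst (disk r G c)). \<forall>e2\<in>edges (fst (disk r G c)). e1 \<noteq> e2 \<longrightarrow> e1 \<inter> e2 = {}"
  proof (intro ballI impI)
    fix e1 e2 assume "e1 \<in> edges (fst (disk r G c))" "e2 \<in> edges (fst (disk r G c))" "e1 \<noteq> e2"
    then show "e1 \<inter> e2 = {}" using wf_graphD(4)[OF assms(1)] es by (meson subsetD)
  qed
  show ?thesis unfolding wf_graph_def using cv e1 ed s1 s2 d1 d2 by (intro conjI) assumption+
qed

lemma disk_sub: assumes "wf_graph G" "c \<in> verts G"
  shows "subgraph (fst (disk r G c)) G"
  using ball_verts[OF assms] unfolding subgraph_def disk_def by auto


lemma adj_disk_sub: "adj (fst (disk r G c)) \<subseteq> adj G"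
  unfolding adj_def disk_def by auto

lemma relpow_mono_sub: "(A :: ('a \<times> 'a) set) \<subseteq> B \<Longrightarrow> x \<in> A ^^ k \<Longrightarrow> x \<in> B ^^ k"
proof (induction k arbitrary: x)
  case 0 then show ?case by auto
next
  case (Suc k) then show ?case by auto
qed

lemma walk_disk: "k \<le> Suc r \<Longrightarrow> (c, u) \<in> adj G ^^ k \<Longrightarrow> (c, u) \<in> adj (fst (disk r G c)) ^^ k"
proof (induction k arbitrary: u)
  case 0 then show ?case by simp
next
  case (Suc k)
  from Suc.prems(2) obtain w where w: "(c, w) \<in> adj G ^^ k" "(w, u) \<in> adj G"
    by (rule relpow_Suc_E)
  have kr: "k \<le> r" using Suc.prems(1) by simp
  have wb: "w \<in> ball G c r" unfolding ball_def using w(1) kr by blast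
  obtain e p q where e: "e \<in> edges G" "(w, p) \<in> e" "(u, q) \<in> e"
    using w(2) unfolding adj_def by blast
  have "e \<in> edges (fst (disk r G c))" unfolding disk_simps using e wb by blast
  then have "(w, u) \<in> adj (fst (disk r G c))" using e unfolding adj_def by blast
  moreover have "(c, w) \<in> adj (fst (disk r G c)) ^^ k"
    using Suc.IH[OF _ w(1)] kr by simp
  ultimately show ?case by (rule relpow_Suc_I[rotated])
qed

lemma ball_disk: assumes "k \<le> Suc r" shows "ball (fst (disk r G c)) c k = ball G c k"
proof
  show "ball (fst (disk r G c)) c k \<subseteq> ball G c k"
  proof
    fix x assume "x \<in> ball (fst (disk r G c)) c k"
    then obtain j where j: "j \<le> k" "(c, x) \<in> adj (fst (disk r G c)) ^^ j" unfolding ball_def by blast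
    have "(c, x) \<in> adj G ^^ j" by (rule relpow_mono_sub[OF adj_disk_sub j(2)])
    then show "x \<in> ball G c k" unfolding ball_def using j(1) by blast
  qed
  show "ball G c k \<subseteq> ball (fst (disk r G c)) c k"
  proof
    fix x assume "x \<in> ball G c k"
    then obtain j where j: "j \<le> k" "(c, x) \<in> adj G ^^ j" unfolding ball_def by blast
    have "(c, x) \<in> adj (fst (disk r G c)) ^^ j" by (rule walk_disk[OF _ j(2)]) (use j(1) assms in simp)
    then show "x \<in> ball (fst (disk r G c)) c k" unfolding ball_def using j(1) by blast
  qed
qed

lemma disk_disk: "disk r (fst (disk r G c)) c = disk r G c"
proof -
  have b1: "ball (fst (disk r G c)) c (Suc r) = ball G c (Suc r)" by (rule ball_disk) simp
  have b2: "ball (fst (disk r G c)) c r = ball G c r" by (rule ball_disk) simp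
  show ?thesis
    unfolding disk_def[of r "fst (disk r G c)" c] b1 b2
    by (simp add: disk_def)
qed

lemma wf_Gunion:
  assumes "countable I" "\<And>i. i \<in> I \<Longrightarrow> wf_graph (g i) \<and> finite (verts (g i))"
    "\<And>i j. i \<in> I \<Longrightarrow> j \<in> I \<Longrightarrow> consistent (g i) (g j)"
  shows "wf_graph (Gunion (g ` I))"
proof -
  have c: "countable (\<Union>i\<in>I. verts (g i))"
    using assms(1,2) by (intro countable_UN) (auto intro: countable_finite)
  have sv: "single_valued (\<Union>i\<in>I. vlab (g i))"
    unfolding single_valued_def
  proof (intro allI impI)
    fix x y z assume h: "(x, y) \<in> (\<Union>i\<in>I. vlab (g i))" "(x, z) \<in> (\<Union>i\<in>I. vlab (g i))"
    then obtain i j where "i \<in> I" "j \<in> I" "(x, y) \<in> vlab (g i)" "(x, z) \<in> vlab (g j)" by auto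
    with assms(3)[of i j] show "y = z" unfolding consistent_def single_valued_def by blast
  qed
  have se: "single_valued (\<Union>i\<in>I. elab (g i))"
    unfolding single_valued_def
  proof (intro allI impI)
    fix x y z assume h: "(x, y) \<in> (\<Union>i\<in>I. elab (g i))" "(x, z) \<in> (\<Union>i\<in>I. elab (g i))"
    then obtain i j where "i \<in> I" "j \<in> I" "(x, y) \<in> elab (g i)" "(x, z) \<in> elab (g j)" by auto
    with assms(3)[of i j] show "y = z" unfolding consistent_def single_valued_def by blast
  qed
  have ed: "\<forall>e1\<in>(\<Union>i\<in>I. edges (g i)). \<forall>e2\<in>(\<Union>i\<in>I. edges (g i)). e1 \<noteq> e2 \<longrightarrow> e1 \<inter> e2 = {}"
  proof (intro ballI impI)
    fix e1 e2 assume "e1 \<in> (\<Union>i\<in>I. edges (g i))" "e2 \<in> (\<Union>i\<in>I. edges (g i))" "e1 \<noteq> e2"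
    then obtain i j where "i \<in> I" "j \<in> I" "e1 \<in> edges (g i)" "e2 \<in> edges (g j)" by auto
    with assms(3)[of i j] \<open>e1 \<noteq> e2\<close> show "e1 \<inter> e2 = {}" unfolding consistent_def by blast
  qed
  have e1: "\<forall>e\<in>(\<Union>i\<in>I. edges (g i)). card e = 2 \<and> e \<subseteq> (\<Union>i\<in>I. verts (g i)) \<times> UNIV"
  proof
    fix e assume "e \<in> (\<Union>i\<in>I. edges (g i))"
    then obtain i where i: "i \<in> I" "e \<in> edges (g i)" by blast
    have w: "wf_graph (g i)" using assms(2)[OF i(1)] by blast
    have "card e = 2" using wf_graphD(2)[OF w i(2)] .
    moreover have "e \<subseteq> verts (g i) \<times> UNIV" using wf_graphD(3)[OF w i(2)] .
    then have "e \<subseteq> (\<Union>i\<in>I. verts (g i)) \<times> UNIV" using i(1) by blast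
    ultimately show "card e = 2 \<and> e \<subseteq> (\<Union>i\<in>I. verts (g i)) \<times> UNIV" by blast
  qed
  have d1: "Domain (\<Union>i\<in>I. vlab (g i)) \<subseteq> (\<Union>i\<in>I. verts (g i))"
  proof
    fix x assume "x \<in> Domain (\<Union>i\<in>I. vlab (g i))"
    then obtain i where i: "i \<in> I" "x \<in> Domain (vlab (g i))" by blast
    have w: "wf_graph (g i)" using assms(2)[OF i(1)] by blast
    show "x \<in> (\<Union>i\<in>I. verts (g i))" using wf_graphD(6)[OF w] i by blast
  qed
  have d2: "Domain (\<Union>i\<in>I. elab (g i)) \<subseteq> (\<Union>i\<in>I. edges (g i))"
  proof
    fix x assume "x \<in> Domain (\<Union>i\<in>I. elab (g i))"
    then obtain i where i: "i \<in> I" "x \<in> Domain (elab (g i))" by blast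
    have w: "wf_graph (g i)" using assms(2)[OF i(1)] by blast
    show "x \<in> (\<Union>i\<in>I. edges (g i))" using wf_graphD(8)[OF w] i by blast
  qed
  have eqs: "verts (Gunion (g ` I)) = (\<Union>i\<in>I. verts (g i))"
    "edges (Gunion (g ` I)) = (\<Union>i\<in>I. edges (g i))"
    "vlab (Gunion (g ` I)) = (\<Union>i\<in>I. vlab (g i))"
    "elab (Gunion (g ` I)) = (\<Union>i\<in>I. elab (g i))"
    unfolding Gunion_def by (simp_all add: image_image)
  show ?thesis unfolding wf_graph_def eqs
    using c sv se ed e1 d1 d2 by (intro conjI) assumption+
qed

lemma CGD_wf:
  assumes "local_rule r f" "wf_graph G"
  shows "wf_graph (Gunion {f (disk r G v) | v. v \<in> verts G})"
proof -
  have eq: "{f (disk r G v) | v. v \<in> verts G} = (\<lambda>v. f (disk r G v)) ` verts G" by auto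
  have dk: "\<And>v. v \<in> verts G \<Longrightarrow> disk r G v \<in> Disks r" using assms(2) unfolding Disks_def by blast
  obtain b where b: "\<forall>D\<in>Disks r. finite (verts (f D)) \<and> card (verts (f D)) \<le> b"
    using assms(1) unfolding local_rule_def by blast
  show ?thesis unfolding eq
    apply (rule wf_Gunion)
    subgoal using assms(2) unfolding wf_graph_def by blast
    subgoal using assms(1) dk b unfolding local_rule_def by blast
    subgoal using assms unfolding local_rule_def by blast
    done
qed

theorem corollary2p10:
  fixes F :: "('v, 'p::finite, 's, 'd) graph \<Rightarrow> ('v, 'p, 's, 'd) graph"
  assumes "uncountable (UNIV :: 'v set)"
    and "is_CGD F"
  shows "monotonic_dyn F \<longleftrightarrow> left_Kan_extension F"
proof -
  obtain r0 f0 where lr: "local_rule r0 f0"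
    and Feq: "\<And>G. G \<in> Graphs \<Longrightarrow> F G = Gunion {f0 (disk r0 G v) | v. v \<in> verts G}"
    using assms(2) unfolding is_CGD_def by blast
  have Fwf: "F G \<in> Graphs" if "G \<in> Graphs" for G
    using Feq[OF that] CGD_wf[OF lr] that unfolding Graphs_def by simp
  have dwf: "fst D \<in> Graphs" if "D \<in> Disks r0" for D :: "('v, 'p, 's, 'd) graph \<times> 'v"
    using that wf_disk unfolding Disks_def Graphs_def by fastforce
  show ?thesis
  proof
    assume mono: "monotonic_dyn F"
    show "left_Kan_extension F"
      unfolding left_Kan_extension_def
    proof (intro exI[of _ r0] exI[of _ "\<lambda>D :: ('v, 'p, 's, 'd) graph \<times> 'v. F (fst D)"] conjI ballI impI)
      fix D :: "('v, 'p, 's, 'd) graph \<times> 'v" assume "D \<in> Disks r0" then show "F (fst D) \<in> Graphs" using Fwf dwf by blast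
    next
      fix D D' :: "('v, 'p, 's, 'd) graph \<times> 'v" assume "D \<in> Disks r0" "D' \<in> Disks r0" "subdisk D D'"
      then show "subgraph (F (fst D)) (F (fst D'))"
        using mono dwf unfolding monotonic_dyn_def subdisk_def by blast
    next
      fix G :: "('v, 'p, 's, 'd) graph" assume G: "G \<in> Graphs"
      show "is_sup {F (fst D) |D. D \<in> Disks r0 \<and> subgraph (fst D) G} (F G)"
        unfolding is_sup_def
      proof (intro conjI ballI impI)
        show "F G \<in> Graphs" using Fwf G by blast
      next
        fix Y assume "Y \<in> {F (fst D) |D. D \<in> Disks r0 \<and> subgraph (fst D) G}"
        then show "subgraph Y (F G)" using mono dwf G unfolding monotonic_dyn_def by blast
      next
        fix Z assume Z: "Z \<in> Graphs" "\<forall>Y\<in>{F (fst D) |D. D \<in> Disks r0 \<and> subgraph (fst D) G}. subgraph Y Z"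
        show "subgraph (F G) Z"
          unfolding Feq[OF G]
        proof (rule Gunion_subgraph)
          fix Y assume "Y \<in> {f0 (disk r0 G v) |v. v \<in> verts G}"
          then obtain v where v: "v \<in> verts G" "Y = f0 (disk r0 G v)" by blast
          have Gw: "wf_graph G" using G unfolding Graphs_def by simp
          let ?D = "disk r0 G v"
          have DD: "?D \<in> Disks r0" using v Gw unfolding Disks_def by blast
          have sub: "subgraph (fst ?D) G" using disk_sub[OF Gw v(1)] .
          have "subgraph Y (F (fst ?D))"
          proof -
            have "v \<in> verts (fst ?D)" using ball_center by (simp add: disk_def)
            then have "f0 (disk r0 (fst ?D) v) \<in> {f0 (disk r0 (fst ?D) w) |w. w \<in> verts (fst ?D)}" by blast
            then show ?thesis unfolding Feq[OF dwf[OF DD]] v(2) disk_disk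
              by (rule subgraph_Gunion)
          qed
          moreover have "subgraph (F (fst ?D)) Z" using Z(2) DD sub by blast
          ultimately show "subgraph Y Z" unfolding subgraph_def by blast
        qed
      qed
    qed
  next
    assume "left_Kan_extension F"
    then obtain r f where sup: "\<forall>G\<in>Graphs. is_sup {f D | D. D \<in> Disks r \<and> subgraph (fst D) G} (F G)"
      unfolding left_Kan_extension_def by blast
    show "monotonic_dyn F" unfolding monotonic_dyn_def
    proof (intro ballI impI)
      fix G H :: "('v, 'p, 's, 'd) graph" assume GH: "G \<in> Graphs" "H \<in> Graphs" "subgraph G H"
      have trans: "subgraph A C" if "subgraph A B" "subgraph B C" for A B C :: "('v, 'p, 's, 'd) graph"
        using that unfolding subgraph_def by blast
      have sH: "is_sup {f D | D. D \<in> Disks r \<and> subgraph (fst D) H} (F H)" using sup GH by blast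
      have sG: "is_sup {f D | D. D \<in> Disks r \<and> subgraph (fst D) G} (F G)" using sup GH by blast
      have "\<forall>Y\<in>{f D | D. D \<in> Disks r \<and> subgraph (fst D) G}. subgraph Y (F H)"
        using sH GH(3) trans unfolding is_sup_def by blast
      then show "subgraph (F G) (F H)" using sG sH unfolding is_sup_def by blast
    qed
  qed
qed

end
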